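(* Let $X$ be a real separable Hilbert space and $A\in\mathcal L(X)$ monotone, i.e. $\langle Ax,x\rangle\ge0$ for all $x\in X$. Consider the linear equations $Ax=y$ with $y=Ax^\dagger$, $x^\dagger\in X$. (a) These equations are locally well-posed at every $x^\dagger\in X$ if and only if $A$ is continuously invertible, i.e. $A$ is bijective with $A^{-1}\in\mathcal L(X)$; in this case $\|(A+\alpha I)^{-1}\|\le \|A^{-1}\|$ for all $\alpha>0$. (b) These equations are locally ill-posed at every $x^\dagger\in X$ if and only if $\mathcal N(A)\neq\{0\}$ or the range $\mathcal R(A)$ is not closed; in this case $\|(A+\alpha I)^{-1}\|=\frac1\alpha$ for all $\alpha>0$. Exactly one of the cases (a), (b) occurs.
   Context: $\mathcal L(X)$ denotes the Banach space of bounded linear operators $X\to X$ with operator norm. $\mathcal N(A)$ is the null space and $\mathcal R(A)$ the range of $A$. For a monotone $A\in\mathcal L(X)$ and $\alpha>0$, $A+\alpha I$ is boundedly invertible. The equation $Ax=y$ with $y=Ax^\dagger$ is called locally well-posed at $x^\dagger$ if there is $r>0$ such that for every sequence $(x_k)$ in the closed ball of radius $r$ around $x^\dagger$, $\|Ax_k-Ax^\dagger\|\to0$ implies $\|x_k-x^\dagger\|\to0$; otherwise it is locally ill-posed at $x^\dagger$. *)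

theory Defs
  imports "HOL-Analysis.Analysis"
begin

definition monotone_op :: "('a::real_inner \<Rightarrow> 'a) \<Rightarrow> bool" where
  "monotone_op A \<longleftrightarrow> (\<forall>x. inner (A x) x \<ge> 0)"

definition locally_well_posed :: "('a::real_normed_vector \<Rightarrow> 'a) \<Rightarrow> 'a \<Rightarrow> bool" where
  "locally_well_posed A xd \<longleftrightarrow>
     (\<exists>r>0. \<forall>xs::nat \<Rightarrow> 'a. (\<forall>k. xs k \<in> cball xd r) \<longrightarrow>
        (\<lambda>k. norm (A (xs k) - A xd)) \<longlonglongrightarrow> 0 \<longrightarrow>
        (\<lambda>k. norm (xs k - xd)) \<longlonglongrightarrow> 0)"

definition locally_ill_posed :: "('a::real_normed_vector \<Rightarrow> 'a) \<Rightarrow> 'a \<Rightarrow> bool" where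
  "locally_ill_posed A xd \<longleftrightarrow> \<not> locally_well_posed A xd"

definition continuously_invertible :: "('a::real_normed_vector \<Rightarrow> 'a) \<Rightarrow> bool" where
  "continuously_invertible A \<longleftrightarrow> bij A \<and> bounded_linear (inv A)"

end

theory Submission
  imports Defs "HOL-Analysis.Analysis"
begin

definition BB :: "('a::real_normed_vector \<Rightarrow> 'a) \<Rightarrow> bool" where
  "BB A \<longleftrightarrow> (\<exists>c>0. \<forall>x. c * norm x \<le> norm (A x))"

lemma wp_iff_BB:
  fixes A :: "'a::real_normed_vector \<Rightarrow> 'a"
  assumes bl: "bounded_linear A"
  shows "locally_well_posed A xd \<longleftrightarrow> BB A"
proof
  assume B: "BB A"
  then obtain c where c: "c > 0" "\<And>x. c * norm x \<le> norm (A x)" unfolding BB_def by blast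
  show "locally_well_posed A xd"
    unfolding locally_well_posed_def
  proof (intro exI[of _ 1] conjI allI impI)
    fix xs :: "nat \<Rightarrow> 'a"
    assume lim: "(\<lambda>k. norm (A (xs k) - A xd)) \<longlonglongrightarrow> 0"
    have le: "norm (norm (xs k - xd)) \<le> norm (A (xs k) - A xd) / c" for k
    proof -
      have "c * norm (xs k - xd) \<le> norm (A (xs k - xd))" by (rule c(2))
      also have "A (xs k - xd) = A (xs k) - A xd" using bl by (simp add: linear_diff bounded_linear.linear)
      finally show ?thesis using c(1) by (simp add: field_simps)
    qed
    have L: "(\<lambda>k. norm (A (xs k) - A xd) / c) \<longlonglongrightarrow> 0"
      using tendsto_divide_zero[OF lim] by simp
    show "(\<lambda>k. norm (xs k - xd)) \<longlonglongrightarrow> 0"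
      by (intro Lim_null_comparison[OF _ L] always_eventually allI le)
  qed simp
next
  assume wp: "locally_well_posed A xd"
  show "BB A"
  proof (rule ccontr)
    assume nB: "\<not> BB A"
    from wp obtain r where r: "r > 0" and
      H: "\<And>xs::nat \<Rightarrow> 'a. (\<forall>k. xs k \<in> cball xd r) \<Longrightarrow>
        (\<lambda>k. norm (A (xs k) - A xd)) \<longlonglongrightarrow> 0 \<Longrightarrow> (\<lambda>k. norm (xs k - xd)) \<longlonglongrightarrow> 0"
      unfolding locally_well_posed_def by blast
    have "\<forall>k::nat. \<exists>x. norm (A x) < (1 / (real k + 1)) * norm x"
    proof
      fix k :: nat
      have "\<not> (\<forall>x. (1 / (real k + 1)) * norm x \<le> norm (A x))"
        proof -
        have "(1 / (real k + 1)) > 0" by simp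
        then show ?thesis using nB unfolding BB_def by blast
      qed
      then show "\<exists>x. norm (A x) < (1 / (real k + 1)) * norm x" by (simp add: not_le)
    qed
    then obtain x where x: "\<And>k. norm (A (x k)) < (1 / (real k + 1)) * norm (x k)" by metis
    have xnz: "norm (x k) > 0" for k
    proof -
      have "0 \<le> norm (A (x k))" by simp
      with x[of k] have "0 < 1 / (real k + 1) * norm (x k)" by linarith
      then show ?thesis by (metis mult_zero_right norm_zero order_less_irrefl norm_ge_zero order_le_less)
    qed
    define xs where "xs k = xd + (r / norm (x k)) *\<^sub>R x k" for k
    have dist: "norm (xs k - xd) = r" for k
      using xnz[of k] r by (simp add: xs_def)
    have Axs: "norm (A (xs k) - A xd) = (r / norm (x k)) * norm (A (x k))" for k
      using bl xnz[of k] r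
      by (simp add: xs_def linear_add linear_scale bounded_linear.linear)
    have "\<forall>k. xs k \<in> cball xd r" using dist by (simp add: dist_norm norm_minus_commute)
    moreover have "(\<lambda>k. norm (A (xs k) - A xd)) \<longlonglongrightarrow> 0"
    proof (rule Lim_null_comparison)
      show "\<forall>\<^sub>F k in sequentially. norm (norm (A (xs k) - A xd)) \<le> r * (1 / (real k + 1))"
      proof (intro always_eventually allI)
        fix k
        have "(r / norm (x k)) * norm (A (x k)) \<le> (r / norm (x k)) * ((1 / (real k + 1)) * norm (x k))"
          using x[of k] xnz[of k] r by (intro mult_left_mono) auto
        also have "\<dots> = r * (1 / (real k + 1))" using xnz[of k] by simp
        finally show "norm (norm (A (xs k) - A xd)) \<le> r * (1 / (real k + 1))" using r by (simp add: Axs)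
      qed
      show "(\<lambda>k. r * (1 / (real k + 1))) \<longlonglongrightarrow> 0"
        using tendsto_mult_right_zero[OF LIMSEQ_inverse_real_of_nat, of r]
        by (simp add: divide_inverse add.commute)
    qed
    ultimately have "(\<lambda>k. norm (xs k - xd)) \<longlonglongrightarrow> 0" by (rule H)
    then have "(\<lambda>k. r) \<longlonglongrightarrow> 0" by (simp add: dist)
    then have "r = 0" by (simp add: LIMSEQ_const_iff)
    then show False using r by simp
  qed
qed



lemma KI:
  fixes A :: "'a::real_inner \<Rightarrow> 'a"
  assumes "monotone_op A" "\<alpha> \<ge> 0"
  shows "(norm (A x))\<^sup>2 + \<alpha>\<^sup>2 * (norm x)\<^sup>2 \<le> (norm (A x + \<alpha> *\<^sub>R x))\<^sup>2"
proof -
  have m: "inner (A x) x \<ge> 0" using assms(1) unfolding monotone_op_def by blast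
  have "inner (A x + \<alpha> *\<^sub>R x) (A x + \<alpha> *\<^sub>R x) = inner (A x) (A x) + 2 * \<alpha> * inner (A x) x + \<alpha>\<^sup>2 * inner x x"
    by (simp add: inner_add_left inner_add_right inner_commute power2_eq_square algebra_simps)
  then have "(norm (A x + \<alpha> *\<^sub>R x))\<^sup>2 = (norm (A x))\<^sup>2 + 2 * \<alpha> * inner (A x) x + \<alpha>\<^sup>2 * (norm x)\<^sup>2"
    by (simp only: power2_norm_eq_inner)
  with m assms(2) show ?thesis by simp
qed

lemma KI1:
  fixes A :: "'a::real_inner \<Rightarrow> 'a"
  assumes "monotone_op A" "\<alpha> \<ge> 0"
  shows "norm (A x) \<le> norm (A x + \<alpha> *\<^sub>R x)" "\<alpha> * norm x \<le> norm (A x + \<alpha> *\<^sub>R x)"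
proof -
  have k: "(norm (A x))\<^sup>2 + \<alpha>\<^sup>2 * (norm x)\<^sup>2 \<le> (norm (A x + \<alpha> *\<^sub>R x))\<^sup>2" by (rule KI[OF assms])
  have "(norm (A x))\<^sup>2 \<le> (norm (A x + \<alpha> *\<^sub>R x))\<^sup>2" proof -
    have "0 \<le> \<alpha>\<^sup>2 * (norm x)\<^sup>2" by simp
    then show ?thesis using k by linarith
  qed
  then show "norm (A x) \<le> norm (A x + \<alpha> *\<^sub>R x)" by (rule power2_le_imp_le) simp_all
  have "(\<alpha> * norm x)\<^sup>2 \<le> (norm (A x + \<alpha> *\<^sub>R x))\<^sup>2" proof -
    have "0 \<le> (norm (A x))\<^sup>2" by simp
    moreover have "(\<alpha> * norm x)\<^sup>2 = \<alpha>\<^sup>2 * (norm x)\<^sup>2" by (simp add: power_mult_distrib)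
    ultimately show ?thesis using k by linarith
  qed
  then show "\<alpha> * norm x \<le> norm (A x + \<alpha> *\<^sub>R x)" by (rule power2_le_imp_le) simp_all
qed

lemma coercive_surj:
  fixes T :: "'a::{real_inner,complete_space} \<Rightarrow> 'a"
  assumes bl: "bounded_linear T" and a: "\<alpha> > 0" and co: "\<And>x. \<alpha> * (norm x)\<^sup>2 \<le> inner (T x) x"
  shows "surj T"
proof -
  obtain K0 where K0: "\<And>x. norm (T x) \<le> norm x * K0" "K0 > 0"
    using bounded_linear.pos_bounded[OF bl] by blast
  define K where "K = max K0 \<alpha>"
  have K: "\<And>x. norm (T x) \<le> K * norm x" "K > 0" "\<alpha> \<le> K"
  proof -
    fix x
    have "norm (T x) \<le> norm x * K0" by (rule K0(1))
    also have "\<dots> \<le> norm x * K" unfolding K_def by (intro mult_left_mono) auto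
    finally show "norm (T x) \<le> K * norm x" by (simp add: mult.commute)
  next
    show "K > 0" "\<alpha> \<le> K" using K0 a unfolding K_def by auto
  qed
  define t where "t = \<alpha> / K\<^sup>2"
  define q where "q = sqrt (1 - \<alpha>\<^sup>2 / K\<^sup>2)"
  have t: "t > 0" using a K by (simp add: t_def)
  have qq: "0 \<le> 1 - \<alpha>\<^sup>2 / K\<^sup>2" using K a by (simp add: power_mono field_simps)
  have q: "0 \<le> q" "q < 1" using qq a K by (auto simp: q_def real_sqrt_lt_1_iff)
  have lin: "linear T" using bl bounded_linear.linear by blast
  have contr: "norm (u - t *\<^sub>R T u) \<le> q * norm u" for u
  proof -
    have "inner (u - t *\<^sub>R T u) (u - t *\<^sub>R T u) = inner u u - 2 * t * inner (T u) u + t\<^sup>2 * inner (T u) (T u)"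
      by (simp add: inner_diff_left inner_diff_right inner_commute power2_eq_square algebra_simps)
    then have e: "(norm (u - t *\<^sub>R T u))\<^sup>2 = (norm u)\<^sup>2 - 2 * t * inner (T u) u + t\<^sup>2 * (norm (T u))\<^sup>2"
      by (simp only: power2_norm_eq_inner)
    have "- 2 * t * inner (T u) u \<le> - 2 * t * (\<alpha> * (norm u)\<^sup>2)" using co[of u] t by simp
    moreover have "t\<^sup>2 * (norm (T u))\<^sup>2 \<le> t\<^sup>2 * (K * norm u)\<^sup>2"
      using K(1)[of u] by (intro mult_left_mono power_mono) auto
    ultimately have "(norm (u - t *\<^sub>R T u))\<^sup>2 \<le> (norm u)\<^sup>2 - 2 * t * (\<alpha> * (norm u)\<^sup>2) + t\<^sup>2 * (K * norm u)\<^sup>2"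
      using e by linarith
    also have "\<dots> = (1 - \<alpha>\<^sup>2 / K\<^sup>2) * (norm u)\<^sup>2"
    proof -
      have tK: "t * K\<^sup>2 = \<alpha>" using K(2) by (simp add: t_def)
      have ta: "t * \<alpha> = \<alpha>\<^sup>2 / K\<^sup>2" by (simp add: t_def power2_eq_square)
      have "t\<^sup>2 * (K * norm u)\<^sup>2 = t * (t * K\<^sup>2) * (norm u)\<^sup>2" by (simp add: power_mult_distrib power2_eq_square)
      also have "\<dots> = t * \<alpha> * (norm u)\<^sup>2" by (simp add: tK)
      finally have "t\<^sup>2 * (K * norm u)\<^sup>2 = t * \<alpha> * (norm u)\<^sup>2" .
      then show ?thesis by (simp add: ta[symmetric] algebra_simps)
    qed
    also have "\<dots> = (q * norm u)\<^sup>2" using qq by (simp add: q_def power_mult_distrib)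
    finally have "(norm (u - t *\<^sub>R T u))\<^sup>2 \<le> (q * norm u)\<^sup>2" .
    moreover have "0 \<le> q * norm u" using q by simp
    ultimately show ?thesis by (rule power2_le_imp_le)
  qed
  show ?thesis
  proof (rule surjI[of T "\<lambda>y. THE x. x - t *\<^sub>R (T x - y) = x"])
    fix y
    define f where "f x = x - t *\<^sub>R (T x - y)" for x
    have "\<forall>x x'. dist (f x) (f x') \<le> q * dist x x'"
    proof (intro allI)
      fix x x'
      have "f x - f x' = (x - x') - t *\<^sub>R T (x - x')"
        using lin by (simp add: f_def linear_diff algebra_simps)
      then show "dist (f x) (f x') \<le> q * dist x x'" using contr by (simp add: dist_norm)
    qed
    then have "\<exists>!x. f x = x" using banach_fix_type[OF q] by blast
    then have fx: "f (THE x. f x = x) = (THE x. f x = x)" by (rule theI')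
    then have "t *\<^sub>R (T (THE x. f x = x) - y) = 0" by (simp add: f_def)
    then show "T (THE x. x - t *\<^sub>R (T x - y) = x) = y" using t by (simp add: f_def)
  qed
qed



lemma BB_inj:
  fixes A :: "'a::real_normed_vector \<Rightarrow> 'a"
  assumes bl: "bounded_linear A" and B: "BB A"
  shows "inj A"
proof -
  obtain c where c: "c > 0" "\<And>x. c * norm x \<le> norm (A x)" using B unfolding BB_def by blast
  have "\<forall>x. A x = 0 \<longrightarrow> x = 0"
  proof (intro allI impI)
    fix x assume "A x = 0"
    then have "c * norm x \<le> 0" using c(2)[of x] by simp
    then show "x = 0" using c(1) by (simp add: mult_le_0_iff)
  qed
  then show ?thesis using linear_injective_0[OF bounded_linear.linear[OF bl]] by blast
qed

lemma BB_closed: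
  fixes A :: "'a::{real_normed_vector,complete_space} \<Rightarrow> 'a"
  assumes bl: "bounded_linear A" and B: "BB A"
  shows "closed (range A)"
proof -
  obtain c where c: "c > 0" "\<And>x. c * norm x \<le> norm (A x)" using B unfolding BB_def by blast
  have lin: "linear A" using bl bounded_linear.linear by blast
  show ?thesis unfolding closed_sequential_limits
  proof (intro allI impI, elim conjE)
    fix y l assume yr: "\<forall>n. y n \<in> range A" and yl: "y \<longlonglongrightarrow> l"
    have "\<forall>n. \<exists>z. y n = A z" using yr by blast
    then obtain x where x: "\<And>n. y n = A (x n)" by metis
    have "Cauchy y" using yl by (rule LIMSEQ_imp_Cauchy)
    have "Cauchy x"
    proof (rule metric_CauchyI)
      fix e :: real assume e: "e > 0"
      have ce: "c * e > 0" using c(1) e by simp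
      obtain M where M: "\<forall>m\<ge>M. \<forall>n\<ge>M. dist (y m) (y n) < c * e"
        using metric_CauchyD[OF \<open>Cauchy y\<close> ce] by blast
      show "\<exists>M. \<forall>m\<ge>M. \<forall>n\<ge>M. dist (x m) (x n) < e"
      proof (intro exI allI impI)
        fix m n assume "m \<ge> M" "n \<ge> M"
        have "c * dist (x m) (x n) \<le> norm (A (x m - x n))" using c(2) by (simp add: dist_norm)
        also have "\<dots> = dist (y m) (y n)" using lin by (simp add: x dist_norm linear_diff)
        also have "\<dots> < c * e" using M \<open>m \<ge> M\<close> \<open>n \<ge> M\<close> by blast
        finally show "dist (x m) (x n) < e" using c(1) by simp
      qed
    qed
    then have "convergent x" by (rule Cauchy_convergent)
    then obtain x0 where "x \<longlonglongrightarrow> x0" unfolding convergent_def by blast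
    then have "(\<lambda>n. A (x n)) \<longlonglongrightarrow> A x0" by (rule bounded_linear.tendsto[OF bl])
    then have "y \<longlonglongrightarrow> A x0" by (simp add: x[abs_def])
    then have "l = A x0" using yl LIMSEQ_unique by blast
    then show "l \<in> range A" by simp
  qed
qed

lemma inv_bl:
  fixes T :: "'a::real_normed_vector \<Rightarrow> 'a"
  assumes bl: "bounded_linear T" and bij: "bij T" and c: "c > 0" "\<And>x. c * norm x \<le> norm (T x)"
  shows "bounded_linear (inv T)" "\<And>y. c * norm (inv T y) \<le> norm y"
proof -
  have lin: "linear T" using bl bounded_linear.linear by blast
  have TI: "T (inv T y) = y" for y using bij by (simp add: bij_def surj_f_inv_f)
  have IT: "inv T (T x) = x" for x using bij by (simp add: bij_def inv_f_f)
  show b: "c * norm (inv T y) \<le> norm y" for y using c(2)[of "inv T y"] by (simp add: TI)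
  show "bounded_linear (inv T)"
  proof (rule bounded_linear_intro[where K = "1 / c"])
    fix x y
    have "inv T (x + y) = inv T (T (inv T x + inv T y))" using lin by (simp add: linear_add TI)
    then show "inv T (x + y) = inv T x + inv T y" by (simp add: IT)
  next
    fix r x
    have "inv T (r *\<^sub>R x) = inv T (T (r *\<^sub>R inv T x))" using lin by (simp add: linear_scale TI)
    then show "inv T (r *\<^sub>R x) = r *\<^sub>R inv T x" by (simp add: IT)
  next
    fix x
    show "norm (inv T x) \<le> norm x * (1 / c)" using b[of x] c(1) by (simp add: field_simps)
  qed
qed

lemma BB_mono_surj:
  fixes A :: "'a::{real_inner,complete_space} \<Rightarrow> 'a"
  assumes bl: "bounded_linear A" and B: "BB A" and mo: "monotone_op A"
  shows "surj A"
proof -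
  obtain c where c: "c > 0" "\<And>x. c * norm x \<le> norm (A x)" using B unfolding BB_def by blast
  have cl: "closed (range A)" by (rule BB_closed[OF bl B])
  have res: "surj (\<lambda>x. A x + \<alpha> *\<^sub>R x)" if a: "\<alpha> > 0" for \<alpha> :: real
  proof (rule coercive_surj[OF _ a])
    show "bounded_linear (\<lambda>x. A x + \<alpha> *\<^sub>R x)"
      by (intro bounded_linear_add bl bounded_linear_scaleR_right bounded_linear_ident)
    fix x
    have "inner (A x) x \<ge> 0" using mo unfolding monotone_op_def by blast
    then show "\<alpha> * (norm x)\<^sup>2 \<le> inner (A x + \<alpha> *\<^sub>R x) x"
      by (simp add: inner_add_left flip: power2_norm_eq_inner)
  qed
  show ?thesis
  proof (rule surjI[of A "\<lambda>y. SOME x. A x = y"])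
    fix y
    have "\<forall>n::nat. \<exists>x. A x + (1 / (real n + 1)) *\<^sub>R x = y"
    proof
      fix n :: nat
      have "0 < 1 / (real n + 1)" by simp
      then have "surj (\<lambda>x. A x + (1 / (real n + 1)) *\<^sub>R x)" by (rule res)
      then obtain z where "y = A z + (1 / (real n + 1)) *\<^sub>R z" by (rule surjE)
      then show "\<exists>x. A x + (1 / (real n + 1)) *\<^sub>R x = y" by (intro exI[of _ z]) simp
    qed
    then obtain x where x: "\<And>n. A (x n) + (1 / (real n + 1)) *\<^sub>R x n = y" by metis
    have bnd: "c * norm (x n) \<le> norm y" for n
    proof -
      have "c * norm (x n) \<le> norm (A (x n))" by (rule c(2))
      also have "\<dots> \<le> norm (A (x n) + (1 / (real n + 1)) *\<^sub>R x n)" by (rule KI1(1)[OF mo]) simp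
      finally show ?thesis by (simp add: x)
    qed
    have "(\<lambda>n. (1 / (real n + 1)) *\<^sub>R x n) \<longlonglongrightarrow> 0"
    proof (rule Lim_null_comparison)
      show "\<forall>\<^sub>F n in sequentially. norm ((1 / (real n + 1)) *\<^sub>R x n) \<le> (norm y / c) * (1 / (real n + 1))"
      proof (intro always_eventually allI)
        fix n
        have "norm (x n) \<le> norm y / c" using bnd[of n] c(1) by (simp add: pos_le_divide_eq mult.commute)
        then have "(1 / (real n + 1)) * norm (x n) \<le> (1 / (real n + 1)) * (norm y / c)"
          by (intro mult_left_mono) simp_all
        then show "norm ((1 / (real n + 1)) *\<^sub>R x n) \<le> (norm y / c) * (1 / (real n + 1))"
          by (simp only: norm_scaleR mult.commute) simp
      qed
      show "(\<lambda>n. (norm y / c) * (1 / (real n + 1))) \<longlonglongrightarrow> 0"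
        using tendsto_mult_right_zero[OF LIMSEQ_inverse_real_of_nat, of "norm y / c"]
        by (simp add: divide_inverse add.commute)
    qed
    then have "(\<lambda>n. y - (1 / (real n + 1)) *\<^sub>R x n) \<longlonglongrightarrow> y - 0" by (intro tendsto_diff tendsto_const)
    moreover have "y - (1 / (real n + 1)) *\<^sub>R x n = A (x n)" for n using x[of n] by (simp add: algebra_simps)
    ultimately have L: "(\<lambda>n. A (x n)) \<longlonglongrightarrow> y" by simp
    have P: "\<forall>n. A (x n) \<in> range A" by simp
    have H: "\<forall>x l. (\<forall>n. x n \<in> range A) \<and> x \<longlonglongrightarrow> l \<longrightarrow> l \<in> range A"
      using cl by (simp only: closed_sequential_limits)
    have "y \<in> range A" using H[rule_format, OF conjI[OF P L]] .
    then obtain z where "A z = y" by blast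
    then show "A (SOME x. A x = y) = y" by (rule someI)
  qed
qed



lemma OM_baire:
  fixes A :: "'a::{real_normed_vector,complete_space} \<Rightarrow> 'a"
  assumes bl: "bounded_linear A" and cl: "closed (range A)"
  obtains n :: nat and y0 \<delta> where "\<delta> > 0" "y0 \<in> range A"
    "\<And>y. y \<in> range A \<Longrightarrow> dist y0 y < \<delta> \<Longrightarrow> y \<in> closure (A ` cball 0 (real n))"
proof -
  define R where "R = range A"
  define X where "X = top_of_set R"
  define C where "C n = closure (A ` cball 0 (real n))" for n :: nat
  have cmX: "completely_metrizable_space X"
  proof -
    have "closedin euclidean R" using cl by (simp add: R_def)
    then show ?thesis unfolding X_def by (rule completely_metrizable_space_closedin[OF completely_metrizable_space_euclidean])
  qed
  have CR: "C n \<subseteq> R" for n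
    unfolding C_def R_def by (rule closure_minimal[OF _ cl]) auto
  have cC: "closedin X (C n)" for n
  proof -
    have "C n = R \<inter> C n" using CR[of n] by blast
    moreover have "closed (C n)" unfolding C_def by simp
    ultimately show ?thesis unfolding X_def closedin_closed by blast
  qed
  have UC: "\<Union> (range C) = R"
  proof
    show "\<Union> (range C) \<subseteq> R" using CR by blast
    show "R \<subseteq> \<Union> (range C)"
    proof
      fix y assume "y \<in> R"
      then obtain x where y: "y = A x" unfolding R_def by blast
      obtain n :: nat where n: "norm x \<le> real n" using real_arch_simple by blast
      have "x \<in> cball 0 (real n)" using n by simp
      then have "y \<in> A ` cball 0 (real n)" using y by (rule rev_image_eqI)
      then have "y \<in> C n" unfolding C_def by (rule rev_subsetD[OF _ closure_subset])
      then show "y \<in> \<Union> (range C)" by (rule UN_I[rotated]) simp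
    qed
  qed
  have "\<exists>n. X interior_of C n \<noteq> {}"
  proof (rule ccontr)
    assume "\<not> (\<exists>n. X interior_of C n \<noteq> {})"
    then have e: "\<And>n. X interior_of C n = {}" by blast
    have "X interior_of \<Union> (range C) = {}"
    proof (rule Baire_category_alt)
      show "completely_metrizable_space X \<or> locally_compact_space X \<and> regular_space X" using cmX by blast
      show "countable (range C)" by simp
      fix T assume "T \<in> range C"
      then obtain n where "T = C n" by blast
      then show "closedin X T \<and> X interior_of T = {}" using cC e by simp
    qed
    moreover have "X interior_of \<Union> (range C) = R"
    proof -
      have "topspace X = R" by (simp add: X_def)
      then show ?thesis using interior_of_topspace[of X] UC by simp
    qed
    moreover have "A 0 \<in> R" unfolding R_def by simp
    ultimately show False by simp
  qed
  then obtain n where "X interior_of C n \<noteq> {}" by blast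
  then obtain y0 where "y0 \<in> X interior_of C n" by blast
  then obtain T where T: "openin X T" "y0 \<in> T" "T \<subseteq> C n" unfolding interior_of_def by blast
  then obtain U where U: "open U" "T = R \<inter> U" unfolding X_def openin_open by blast
  then obtain \<delta> where d: "\<delta> > 0" "ball y0 \<delta> \<subseteq> U" using T(2) open_contains_ball by blast
  show ?thesis
  proof (rule that[of \<delta> y0 n])
    show "\<delta> > 0" by (rule d(1))
    show "y0 \<in> range A" using T U R_def by blast
    fix y assume "y \<in> range A" "dist y0 y < \<delta>"
    then have "y \<in> T" using U d R_def by auto
    then show "y \<in> closure (A ` cball 0 (real n))" using T(3) C_def by blast
  qed
qed



lemma range_lin_add:
  assumes "linear A" "u \<in> range A" "v \<in> range A"
  shows "u + v \<in> range A" "u - v \<in> range A" "r *\<^sub>R u \<in> range A"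
proof -
  obtain a b where ab: "u = A a" "v = A b" using assms(2,3) by blast
  show "u + v \<in> range A" using assms(1) ab by (simp add: linear_add[symmetric])
  show "u - v \<in> range A" using assms(1) ab by (simp add: linear_diff[symmetric])
  show "r *\<^sub>R u \<in> range A" using assms(1) ab by (simp add: linear_scale[symmetric])
qed

lemma OM_approx:
  fixes A :: "'a::{real_normed_vector,complete_space} \<Rightarrow> 'a"
  assumes bl: "bounded_linear A" and cl: "closed (range A)"
  obtains M where "M \<ge> 0" "\<And>z e. z \<in> range A \<Longrightarrow> e > 0 \<Longrightarrow> \<exists>x. norm x \<le> M * norm z \<and> norm (A x - z) < e"
proof -
  have lin: "linear A" using bl bounded_linear.linear by blast
  obtain n :: nat and y0 \<delta> where d: "\<delta> > 0" and y0: "y0 \<in> range A"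
    and H: "\<And>y. y \<in> range A \<Longrightarrow> dist y0 y < \<delta> \<Longrightarrow> y \<in> closure (A ` cball 0 (real n))"
    by (rule OM_baire[OF bl cl]) (rule that)
  have apx: "\<exists>x. norm x \<le> 2 * real n \<and> norm (A x - z) < e"
    if z: "z \<in> range A" "norm z < \<delta>" and e: "e > 0" for z e
  proof -
    have e2: "e / 2 > 0" using e by simp
    have "y0 + z \<in> range A" by (rule range_lin_add(1)[OF lin y0 z(1)])
    moreover have "dist y0 (y0 + z) < \<delta>" using z(2) by (simp add: dist_norm)
    ultimately have "y0 + z \<in> closure (A ` cball 0 (real n))" by (rule H)
    then obtain w1 where w1: "w1 \<in> A ` cball 0 (real n)" "dist w1 (y0 + z) < e / 2"
      using e2 unfolding closure_approachable by blast
    have "y0 \<in> closure (A ` cball 0 (real n))" using y0 d by (intro H) simp_all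
    then obtain w2 where w2: "w2 \<in> A ` cball 0 (real n)" "dist w2 y0 < e / 2"
      using e2 unfolding closure_approachable by blast
    obtain x1 where x1: "w1 = A x1" "norm x1 \<le> real n" using w1(1) by auto
    obtain x2 where x2: "w2 = A x2" "norm x2 \<le> real n" using w2(1) by auto
    have "norm (x1 - x2) \<le> norm x1 + norm x2" by (rule norm_triangle_ineq4)
    then have nx: "norm (x1 - x2) \<le> 2 * real n" using x1(2) x2(2) by linarith
    have eq: "A (x1 - x2) - z = (A x1 - (y0 + z)) - (A x2 - y0)" using lin by (simp add: linear_diff algebra_simps)
    have "norm (A (x1 - x2) - z) = norm ((A x1 - (y0 + z)) - (A x2 - y0))" by (simp only: eq)
    also have "\<dots> \<le> norm (A x1 - (y0 + z)) + norm (A x2 - y0)" by (rule norm_triangle_ineq4)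
    also have "\<dots> < e / 2 + e / 2" using w1(2) w2(2) x1(1) x2(1) by (simp add: dist_norm add_strict_mono)
    finally have "norm (A (x1 - x2) - z) < e" by simp
    then show ?thesis using nx by blast
  qed
  define M where "M = 4 * real n / \<delta>"
  show ?thesis
  proof (rule that[of M])
    show "M \<ge> 0" using d by (simp add: M_def)
    fix z e assume z: "z \<in> range A" and e: "(e::real) > 0"
    show "\<exists>x. norm x \<le> M * norm z \<and> norm (A x - z) < e"
    proof (cases "z = 0")
      case True
      then have "norm (0::'a) \<le> M * norm z \<and> norm (A 0 - z) < e" using e lin by (simp add: linear_0)
      then show ?thesis by blast
    next
      case False
      define s where "s = \<delta> / (2 * norm z)"
      have s: "s > 0" using False d by (simp add: s_def)
      have "s *\<^sub>R z \<in> range A" by (rule range_lin_add(3)[OF lin z z])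
      moreover have "norm (s *\<^sub>R z) < \<delta>" using False d s by (simp add: s_def)
      moreover have "s * e > 0" using s e by simp
      ultimately obtain x' where x': "norm x' \<le> 2 * real n" "norm (A x' - s *\<^sub>R z) < s * e"
        using apx by blast
      define x where "x = (1 / s) *\<^sub>R x'"
      have "A x - z = (1 / s) *\<^sub>R (A x' - s *\<^sub>R z)" using lin s
        by (simp add: x_def linear_scale algebra_simps)
      then have "norm (A x - z) = (1 / s) * norm (A x' - s *\<^sub>R z)" using s by simp
      also have "\<dots> < (1 / s) * (s * e)" using x'(2) s by (intro mult_strict_left_mono) simp_all
      also have "\<dots> = e" using s by simp
      finally have 1: "norm (A x - z) < e" .
      have "norm x = (1 / s) * norm x'" using s by (simp add: x_def)
      also have "\<dots> \<le> (1 / s) * (2 * real n)" using x'(1) s by (intro mult_left_mono) simp_all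
      also have "\<dots> = M * norm z" using False d by (simp add: s_def M_def field_simps)
      finally show ?thesis using 1 by blast
    qed
  qed
qed



lemma OM:
  fixes A :: "'a::{real_normed_vector,complete_space} \<Rightarrow> 'a"
  assumes bl: "bounded_linear A" and cl: "closed (range A)" and inj: "inj A"
  shows "BB A"
proof -
  have lin: "linear A" using bl bounded_linear.linear by blast
  obtain M where M0: "M \<ge> 0" and
    MA: "\<And>z e. z \<in> range A \<Longrightarrow> e > 0 \<Longrightarrow> \<exists>x. norm x \<le> M * norm z \<and> norm (A x - z) < e"
    by (rule OM_approx[OF bl cl]) (rule that)
  define P where "P z x \<longleftrightarrow> norm x \<le> M * norm z \<and> norm (A x - z) \<le> norm z / 2" for z x
  define g where "g z = (SOME x. P z x)" for z
  have gP: "P z (g z)" if z: "z \<in> range A" for z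
  proof -
    have "\<exists>x. P z x"
    proof (cases "z = 0")
      case True
      then have "P z 0" using lin by (simp add: P_def linear_0)
      then show ?thesis by blast
    next
      case False
      then have "norm z / 2 > 0" by simp
      then obtain x where "norm x \<le> M * norm z" "norm (A x - z) < norm z / 2" using MA[OF z] by blast
      then have "P z x" by (simp add: P_def)
      then show ?thesis by blast
    qed
    then show ?thesis unfolding g_def by (rule someI_ex)
  qed
  define step where "step z = z - A (g z)" for z
  have key: "norm x0 \<le> 2 * M * norm (A x0)" for x0
  proof -
  define z0 where "z0 = A x0"
  define zs where "zs k = (step ^^ k) z0" for k
  have zsS: "zs (Suc k) = step (zs k)" for k by (simp add: zs_def)
  have zs0: "zs 0 = z0" by (simp add: zs_def)
  have inv: "zs k \<in> range A \<and> norm (zs k) \<le> norm z0 * (1/2)^k" for k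
  proof (induction k)
    case 0
    show ?case by (simp add: zs0 z0_def)
  next
    case (Suc k)
    then have r: "zs k \<in> range A" and b: "norm (zs k) \<le> norm z0 * (1/2)^k" by blast+
    have p: "P (zs k) (g (zs k))" by (rule gP[OF r])
    have "zs (Suc k) \<in> range A" unfolding zsS step_def
      by (rule range_lin_add(2)[OF lin r]) simp
    moreover have "norm (zs (Suc k)) \<le> norm z0 * (1/2)^Suc k"
    proof -
      have "norm (zs (Suc k)) = norm (A (g (zs k)) - zs k)" by (simp add: zsS step_def norm_minus_commute)
      also have "\<dots> \<le> norm (zs k) / 2" using p by (simp add: P_def)
      also have "\<dots> \<le> norm z0 * (1/2)^k / 2" using b by simp
      also have "\<dots> = norm z0 * (1/2)^Suc k" by simp
      finally show ?thesis .
    qed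
    ultimately show ?case by blast
  qed
  define xs where "xs k = g (zs k)" for k
  have xsb: "norm (xs k) \<le> M * norm z0 * (1/2)^k" for k
  proof -
    have "norm (xs k) \<le> M * norm (zs k)" using gP[of "zs k"] inv[of k] by (simp add: xs_def P_def)
    also have "\<dots> \<le> M * (norm z0 * (1/2)^k)" using inv[of k] M0 by (intro mult_left_mono) simp_all
    finally show ?thesis by (simp add: mult.assoc)
  qed
  have Axs: "A (xs k) = zs k - zs (Suc k)" for k by (simp add: xs_def zsS step_def)
  define S where "S n = (\<Sum>k<n. xs k)" for n
  have AS: "A (S n) = z0 - zs n" for n
  proof (induction n)
    case 0
    show ?case using lin by (simp add: S_def zs0 linear_0)
  next
    case (Suc n)
    have "A (S (Suc n)) = A (S n) + A (xs n)" using lin by (simp add: S_def linear_add)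
    then show ?case using Suc by (simp add: Axs)
  qed
  define T where "T m = 2 * M * norm z0 * (1/2)^m" for m :: nat
  have ST: "norm (S n - S m) \<le> T m - T n" if "m \<le> n" for m n
    using that
  proof (induction n rule: dec_induct)
    case base
    show ?case by simp
  next
    case (step n)
    have eq: "S (Suc n) - S m = (S n - S m) + xs n" by (simp add: S_def)
    have "norm (S (Suc n) - S m) = norm ((S n - S m) + xs n)" by (simp only: eq)
    also have "\<dots> \<le> norm (S n - S m) + norm (xs n)" by (rule norm_triangle_ineq)
    also have "\<dots> \<le> (T m - T n) + M * norm z0 * (1/2)^n" using step.IH xsb[of n] by linarith
    also have "\<dots> = T m - T (Suc n)" by (simp add: T_def)
    finally show ?case .
  qed
  have T0: "T \<longlonglongrightarrow> 0"
    unfolding T_def by (intro tendsto_mult_right_zero LIMSEQ_power_zero) simp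
  have "Cauchy S"
  proof (rule metric_CauchyI)
    fix e :: real assume e: "e > 0"
    have "\<forall>\<^sub>F m in sequentially. T m < e" using order_tendstoD(2)[OF T0 e] .
    then obtain N where N: "\<And>m. m \<ge> N \<Longrightarrow> T m < e" unfolding eventually_sequentially by blast
    have Tnn: "T n \<ge> 0" for n using M0 by (simp add: T_def)
    show "\<exists>N. \<forall>m\<ge>N. \<forall>n\<ge>N. dist (S m) (S n) < e"
    proof (intro exI allI impI)
      fix m n assume mn: "m \<ge> N" "n \<ge> N"
      show "dist (S m) (S n) < e"
      proof (cases "m \<le> n")
        case True
        have "dist (S m) (S n) = norm (S n - S m)" by (simp add: dist_norm norm_minus_commute)
        also have "\<dots> \<le> T m - T n" by (rule ST[OF True])
        also have "\<dots> \<le> T m" using Tnn[of n] by simp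
        also have "\<dots> < e" by (rule N[OF mn(1)])
        finally show ?thesis .
      next
        case False
        then have nm: "n \<le> m" by simp
        have "dist (S m) (S n) = norm (S m - S n)" by (simp add: dist_norm)
        also have "\<dots> \<le> T n - T m" by (rule ST[OF nm])
        also have "\<dots> \<le> T n" using Tnn[of m] by simp
        also have "\<dots> < e" by (rule N[OF mn(2)])
        finally show ?thesis .
      qed
    qed
  qed
  then have "convergent S" by (rule Cauchy_convergent)
  then obtain s where s: "S \<longlonglongrightarrow> s" unfolding convergent_def by blast
  have zs_0: "zs \<longlonglongrightarrow> 0"
  proof (rule Lim_null_comparison)
    show "\<forall>\<^sub>F k in sequentially. norm (zs k) \<le> norm z0 * (1/2)^k"
      using inv by (intro always_eventually allI) blast
    show "(\<lambda>k. norm z0 * (1/2)^k) \<longlonglongrightarrow> 0"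
      by (intro tendsto_mult_right_zero LIMSEQ_power_zero) simp
  qed
  have "(\<lambda>n. A (S n)) \<longlonglongrightarrow> A s" by (rule bounded_linear.tendsto[OF bl s])
  moreover have "(\<lambda>n. A (S n)) \<longlonglongrightarrow> z0 - 0" unfolding AS by (intro tendsto_diff tendsto_const zs_0)
  ultimately have "A s = z0" using LIMSEQ_unique by fastforce
  then have sx: "s = x0" using inj unfolding z0_def inj_def by blast
  have "norm (S n) \<le> T 0" for n
  proof -
    have "norm (S n - S 0) \<le> T 0 - T n" by (rule ST) simp
    moreover have "T n \<ge> 0" using M0 by (simp add: T_def)
    ultimately show ?thesis by (simp add: S_def)
  qed
  then have "norm s \<le> T 0" using s by (intro LIMSEQ_le_const2[OF tendsto_norm[OF s]]) simp_all
  then show "norm x0 \<le> 2 * M * norm (A x0)" using sx by (simp add: T_def z0_def)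
  qed
  show ?thesis unfolding BB_def
  proof (intro exI[of _ "1 / (2 * M + 1)"] conjI allI)
    show "1 / (2 * M + 1) > 0" using M0 by simp
    fix x
    have e: "(2 * M + 1) * norm (A x) = 2 * M * norm (A x) + norm (A x)" by (simp add: algebra_simps)
    have "norm x \<le> (2 * M + 1) * norm (A x)" using key[of x] norm_ge_zero[of "A x"] unfolding e by linarith
    then show "1 / (2 * M + 1) * norm x \<le> norm (A x)" using M0 by (simp add: field_simps)
  qed
qed



lemma resolvent:
  fixes A :: "'a::{real_inner,complete_space} \<Rightarrow> 'a"
  assumes bl: "bounded_linear A" and mo: "monotone_op A" and a: "\<alpha> > 0"
  shows "bounded_linear (\<lambda>x. A x + \<alpha> *\<^sub>R x)" "bij (\<lambda>x. A x + \<alpha> *\<^sub>R x)"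
    "bounded_linear (inv (\<lambda>x. A x + \<alpha> *\<^sub>R x))"
    "\<And>y. \<alpha> * norm (inv (\<lambda>x. A x + \<alpha> *\<^sub>R x) y) \<le> norm y"
proof -
  define B where "B = (\<lambda>x. A x + \<alpha> *\<^sub>R x)"
  have blB: "bounded_linear B" unfolding B_def
    by (intro bounded_linear_add bl bounded_linear_scaleR_right bounded_linear_ident)
  have lo: "\<alpha> * norm x \<le> norm (B x)" for x unfolding B_def using KI1(2)[OF mo] a by simp
  have BBB: "BB B" unfolding BB_def using a lo by blast
  have co: "\<alpha> * (norm x)\<^sup>2 \<le> inner (B x) x" for x
  proof -
    have "inner (A x) x \<ge> 0" using mo unfolding monotone_op_def by blast
    then show ?thesis unfolding B_def by (simp add: inner_add_left flip: power2_norm_eq_inner)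
  qed
  have bijB: "bij B" unfolding bij_def using BB_inj[OF blB BBB] coercive_surj[OF blB a co] by blast
  show "bounded_linear (\<lambda>x. A x + \<alpha> *\<^sub>R x)" using blB by (simp add: B_def)
  show "bij (\<lambda>x. A x + \<alpha> *\<^sub>R x)" using bijB by (simp add: B_def)
  show "bounded_linear (inv (\<lambda>x. A x + \<alpha> *\<^sub>R x))" using inv_bl(1)[OF blB bijB a lo] by (simp add: B_def)
  show "\<alpha> * norm (inv (\<lambda>x. A x + \<alpha> *\<^sub>R x) y) \<le> norm y" for y
    using inv_bl(2)[OF blB bijB a lo] by (simp add: B_def)
qed

theorem proposition1p3:
  fixes A :: "'a::{real_inner, complete_space} \<Rightarrow> 'a"
  assumes "separable_space (euclidean :: 'a topology)"
    and "bounded_linear A"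
    and "monotone_op A"
  shows "((\<forall>xd. locally_well_posed A xd) \<longleftrightarrow> continuously_invertible A)
    \<and> (continuously_invertible A \<longrightarrow>
         (\<forall>\<alpha>>0. onorm (inv (\<lambda>x. A x + \<alpha> *\<^sub>R x)) \<le> onorm (inv A)))
    \<and> ((\<forall>xd. locally_ill_posed A xd) \<longleftrightarrow> ({x. A x = 0} \<noteq> {0} \<or> \<not> closed (range A)))
    \<and> (({x. A x = 0} \<noteq> {0} \<or> \<not> closed (range A)) \<longrightarrow>
         (\<forall>\<alpha>>0. onorm (inv (\<lambda>x. A x + \<alpha> *\<^sub>R x)) = 1 / \<alpha>))
    \<and> ((\<forall>xd. locally_well_posed A xd) \<longleftrightarrow> \<not> (\<forall>xd. locally_ill_posed A xd))"
proof -
  have bl: "bounded_linear A" and mo: "monotone_op A" using assms by blast+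
  have lin: "linear A" using bl bounded_linear.linear by blast
  have wp: "\<And>xd. locally_well_posed A xd \<longleftrightarrow> BB A" by (rule wp_iff_BB[OF bl])
  have allwp: "(\<forall>xd. locally_well_posed A xd) \<longleftrightarrow> BB A" by (simp add: wp)
  have allill: "(\<forall>xd. locally_ill_posed A xd) \<longleftrightarrow> \<not> BB A" by (simp add: locally_ill_posed_def wp)
  have kerR: "({x. A x = 0} \<noteq> {0} \<or> \<not> closed (range A)) \<longleftrightarrow> \<not> BB A"
  proof
    assume H: "{x. A x = 0} \<noteq> {0} \<or> \<not> closed (range A)"
    show "\<not> BB A"
    proof
      assume B: "BB A"
      have "inj A" by (rule BB_inj[OF bl B])
      then have "\<forall>x. A x = 0 \<longrightarrow> x = 0" using linear_injective_0[OF lin] by blast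
      moreover have "A 0 = 0" by (rule linear_0[OF lin])
      ultimately have "{x. A x = 0} = {0}" by blast
      moreover have "closed (range A)" by (rule BB_closed[OF bl B])
      ultimately show False using H by blast
    qed
  next
    assume nB: "\<not> BB A"
    show "{x. A x = 0} \<noteq> {0} \<or> \<not> closed (range A)"
    proof (rule ccontr)
      assume "\<not> ({x. A x = 0} \<noteq> {0} \<or> \<not> closed (range A))"
      then have k: "{x. A x = 0} = {0}" and c: "closed (range A)" by blast+
      have "\<forall>x. A x = 0 \<longrightarrow> x = 0" using k by blast
      then have "inj A" using linear_injective_0[OF lin] by blast
      then have "BB A" by (rule OM[OF bl c])
      then show False using nB by blast
    qed
  qed
  have CI: "continuously_invertible A \<longleftrightarrow> BB A"
  proof
    assume ci: "continuously_invertible A"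
    then have bij: "bij A" and bli: "bounded_linear (inv A)" unfolding continuously_invertible_def by blast+
    obtain K where K: "\<And>y. norm (inv A y) \<le> norm y * K" "K > 0"
      using bounded_linear.pos_bounded[OF bli] by blast
    have "1 / K * norm x \<le> norm (A x)" for x
    proof -
      have "norm x = norm (inv A (A x))" using bij by (simp add: bij_def inv_f_f)
      also have "\<dots> \<le> norm (A x) * K" by (rule K(1))
      finally show ?thesis using K(2) by (simp add: field_simps)
    qed
    then show "BB A" unfolding BB_def using K(2) by (intro exI[of _ "1 / K"]) simp
  next
    assume B: "BB A"
    obtain c where c: "c > 0" "\<And>x. c * norm x \<le> norm (A x)" using B unfolding BB_def by blast
    have bij: "bij A" unfolding bij_def using BB_inj[OF bl B] BB_mono_surj[OF bl B mo] by blast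
    show "continuously_invertible A" unfolding continuously_invertible_def
      using bij inv_bl(1)[OF bl bij c] by blast
  qed
  have partA: "\<forall>\<alpha>>0. onorm (inv (\<lambda>x. A x + \<alpha> *\<^sub>R x)) \<le> onorm (inv A)" if ci: "continuously_invertible A"
  proof (intro allI impI)
    fix \<alpha> :: real assume a: "\<alpha> > 0"
    define B where "B = (\<lambda>x. A x + \<alpha> *\<^sub>R x)"
    have bijB: "bij B" using resolvent(2)[OF bl mo a] by (simp add: B_def)
    have bij: "bij A" and bli: "bounded_linear (inv A)" using ci unfolding continuously_invertible_def by blast+
    have "onorm (inv B) \<le> onorm (inv A)"
    proof (rule onorm_bound)
      show "0 \<le> onorm (inv A)" by (rule onorm_pos_le[OF bli])
    next
      fix y
      define x where "x = inv B y"
      have Bx: "B x = y" using bijB by (simp add: x_def bij_def surj_f_inv_f)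
      have "norm (inv B y) = norm (inv A (A x))" using bij by (simp add: x_def bij_def inv_f_f)
      also have "\<dots> \<le> onorm (inv A) * norm (A x)" by (rule onorm[OF bli])
      also have "\<dots> \<le> onorm (inv A) * norm y"
      proof (rule mult_left_mono)
        show "norm (A x) \<le> norm y" using KI1(1)[OF mo, of \<alpha> x] a Bx by (simp add: B_def)
        show "0 \<le> onorm (inv A)" by (rule onorm_pos_le[OF bli])
      qed
      finally show "norm (inv B y) \<le> onorm (inv A) * norm y" .
    qed
    then show "onorm (inv (\<lambda>x. A x + \<alpha> *\<^sub>R x)) \<le> onorm (inv A)" by (simp add: B_def)
  qed
  have partB: "\<forall>\<alpha>>0. onorm (inv (\<lambda>x. A x + \<alpha> *\<^sub>R x)) = 1 / \<alpha>" if nB: "\<not> BB A"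
  proof (intro allI impI)
    fix \<alpha> :: real assume a: "\<alpha> > 0"
    define B where "B = (\<lambda>x. A x + \<alpha> *\<^sub>R x)"
    have bijB: "bij B" using resolvent(2)[OF bl mo a] by (simp add: B_def)
    have bliB: "bounded_linear (inv B)" using resolvent(3)[OF bl mo a] by (simp add: B_def)
    have lo: "\<alpha> * norm (inv B y) \<le> norm y" for y using resolvent(4)[OF bl mo a] by (simp add: B_def)
    have le: "onorm (inv B) \<le> 1 / \<alpha>"
    proof (rule onorm_bound)
      show "0 \<le> 1 / \<alpha>" using a by simp
    next
      fix y show "norm (inv B y) \<le> 1 / \<alpha> * norm y" using lo[of y] a by (simp add: field_simps)
    qed
    define N where "N = onorm (inv B)"
    have N0: "N \<ge> 0" unfolding N_def by (rule onorm_pos_le[OF bliB])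
    have "\<not> N < 1 / \<alpha>"
    proof
      assume Nl: "N < 1 / \<alpha>"
      then have pos: "1 - N * \<alpha> > 0" using a by (simp add: field_simps)
      have "(1 - N * \<alpha>) * norm x \<le> (N + 1) * norm (A x)" for x
      proof -
        have "norm x = norm (inv B (B x))" using bijB by (simp add: bij_def inv_f_f)
        also have "\<dots> \<le> N * norm (B x)" unfolding N_def by (rule onorm[OF bliB])
        also have "\<dots> \<le> N * (norm (A x) + \<alpha> * norm x)"
        proof (rule mult_left_mono[OF _ N0])
          have "norm (B x) \<le> norm (A x) + norm (\<alpha> *\<^sub>R x)" unfolding B_def by (rule norm_triangle_ineq)
          then show "norm (B x) \<le> norm (A x) + \<alpha> * norm x" using a by simp
        qed
        finally have "norm x \<le> N * norm (A x) + N * \<alpha> * norm x" by (simp add: algebra_simps)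
        then have "(1 - N * \<alpha>) * norm x \<le> N * norm (A x)" by (simp add: algebra_simps)
        also have "\<dots> \<le> (N + 1) * norm (A x)" by (intro mult_right_mono) simp_all
        finally show ?thesis .
      qed
      then have "\<forall>x. (1 - N * \<alpha>) / (N + 1) * norm x \<le> norm (A x)"
        using N0 by (simp add: field_simps)
      then have "BB A" unfolding BB_def using pos N0 by (intro exI[of _ "(1 - N * \<alpha>) / (N + 1)"]) simp
      then show False using nB by blast
    qed
    then have "onorm (inv B) = 1 / \<alpha>" using le unfolding N_def by linarith
    then show "onorm (inv (\<lambda>x. A x + \<alpha> *\<^sub>R x)) = 1 / \<alpha>" by (simp add: B_def)
  qed
  show ?thesis
  proof (intro conjI)
    show "(\<forall>xd. locally_well_posed A xd) \<longleftrightarrow> continuously_invertible A" by (simp only: allwp CI)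
    show "continuously_invertible A \<longrightarrow>
         (\<forall>\<alpha>>0. onorm (inv (\<lambda>x. A x + \<alpha> *\<^sub>R x)) \<le> onorm (inv A))"
      using partA by (intro impI)
    show "(\<forall>xd. locally_ill_posed A xd) \<longleftrightarrow> ({x. A x = 0} \<noteq> {0} \<or> \<not> closed (range A))"
      by (simp only: allill kerR)
    show "({x. A x = 0} \<noteq> {0} \<or> \<not> closed (range A)) \<longrightarrow>
         (\<forall>\<alpha>>0. onorm (inv (\<lambda>x. A x + \<alpha> *\<^sub>R x)) = 1 / \<alpha>)"
    proof
      assume "{x. A x = 0} \<noteq> {0} \<or> \<not> closed (range A)"
      then have "\<not> BB A" by (rule iffD1[OF kerR])
      then show "\<forall>\<alpha>>0. onorm (inv (\<lambda>x. A x + \<alpha> *\<^sub>R x)) = 1 / \<alpha>" by (rule partB)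
    qed
    show "(\<forall>xd. locally_well_posed A xd) \<longleftrightarrow> \<not> (\<forall>xd. locally_ill_posed A xd)"
      by (simp only: allwp allill not_not)
  qed
qed


end
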